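(* Let $G$ be a Garside group, $a\in G$, $a'\in C^{sum}(a)$, and let $\Gamma$ be the minimal summit graph of $a$. Let $p:\pi_1(\Gamma,a')\to G$ be the group homomorphism sending a loop based at $a'$, given as a sequence of arrows $\alpha_1^{\epsilon_1}\cdots\alpha_r^{\epsilon_r}$ ($\epsilon_j=\pm1$, an arrow traversed against its direction having exponent $-1$), to the element $s(\alpha_1)^{\epsilon_1}\cdots s(\alpha_r)^{\epsilon_r}\in G$, where $s(\alpha)$ is the label of $\alpha$. Then the image of $p$ is exactly the centralizer $Z(a')=\{c\in G: ca'=a'c\}$.
   Context: A Garside monoid $M$ is an atomic, left and right cancellative monoid with left and right lcm's and gcd's for all pairs, having a Garside element $\Delta$ whose left divisors coincide with its right divisors, form a finite set and generate $M$; $G$ is its group of fractions, containing $M$. Prefix order on $G$: $a\preceq b$ iff $a^{-1}b\in M$. Simple elements are the divisors of $\Delta$ in $M$; $S$ is the set of simple elements. For $x\in G$, $\inf(x)=\max\{r:\Delta^r\preceq x\}$, $\sup(x)=\min\{r: x\preceq\Delta^r\}$. The summit class $C^{sum}(a)$ is the (finite, nonempty) set of conjugates of $a$ with maximal $\inf$ and minimal $\sup$ among all conjugates of $a$. For $v\in C^{sum}(a)$, $S^{sum}_v$ is the set of $\preceq$-minimal elements of $\{s\in S\setminus\{1\}: s^{-1}vs\in C^{sum}(a)\}$. The minimal summit graph $\Gamma$ of $a$ is the finite directed graph whose vertices are the elements of $C^{sum}(a)$, with an arrow from $v$ to $w$ labelled $s$ for each $s\in S^{sum}_v$ such that $s^{-1}vs=w$.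 The fundamental group $\pi_1(\Gamma,a')$ is that of the underlying (undirected) graph. *)

theory Defs
  imports "HOL-Algebra.Algebra"
begin

text \<open>A Garside group is presented as an ambient group G (HOL-Algebra structure)
together with a submonoid M of G that generates G as a group (so G is the group
of fractions of M) and a Garside element Delta of M.\<close>

definition prefix_le :: "('g, 'b) monoid_scheme \<Rightarrow> 'g set \<Rightarrow> 'g \<Rightarrow> 'g \<Rightarrow> bool" where
  "prefix_le G M a b \<longleftrightarrow> inv\<^bsub>G\<^esub> a \<otimes>\<^bsub>G\<^esub> b \<in> M"

definition suffix_le :: "('g, 'b) monoid_scheme \<Rightarrow> 'g set \<Rightarrow> 'g \<Rightarrow> 'g \<Rightarrow> bool" where
  "suffix_le G M a b \<longleftrightarrow> b \<otimes>\<^bsub>G\<^esub> inv\<^bsub>G\<^esub> a \<in> M"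

definition mprod :: "('g, 'b) monoid_scheme \<Rightarrow> 'g list \<Rightarrow> 'g" where
  "mprod G xs = foldr (\<lambda>x y. x \<otimes>\<^bsub>G\<^esub> y) xs \<one>\<^bsub>G\<^esub>"

definition atomic_monoid :: "('g, 'b) monoid_scheme \<Rightarrow> 'g set \<Rightarrow> bool" where
  "atomic_monoid G M \<longleftrightarrow>
     (\<forall>x\<in>M. \<exists>N::nat. \<forall>as. set as \<subseteq> M - {\<one>\<^bsub>G\<^esub>} \<and> mprod G as = x \<longrightarrow> length as \<le> N)"

definition has_lcms_gcds :: "('g \<Rightarrow> 'g \<Rightarrow> bool) \<Rightarrow> 'g set \<Rightarrow> bool" where
  "has_lcms_gcds R M \<longleftrightarrow>
     (\<forall>a\<in>M. \<forall>b\<in>M.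
        (\<exists>c\<in>M. R a c \<and> R b c \<and> (\<forall>d\<in>M. R a d \<and> R b d \<longrightarrow> R c d)) \<and>
        (\<exists>c\<in>M. R c a \<and> R c b \<and> (\<forall>d\<in>M. R d a \<and> R d b \<longrightarrow> R d c)))"

definition simples :: "('g, 'b) monoid_scheme \<Rightarrow> 'g set \<Rightarrow> 'g \<Rightarrow> 'g set" where
  "simples G M \<Delta> = {s\<in>M. prefix_le G M s \<Delta>}"

definition garside_group :: "('g, 'b) monoid_scheme \<Rightarrow> 'g set \<Rightarrow> 'g \<Rightarrow> bool" where
  "garside_group G M \<Delta> \<longleftrightarrow>
     group G \<and> submonoid M G \<and> generate G M = carrier G \<and>
     atomic_monoid G M \<and>
     has_lcms_gcds (prefix_le G M) M \<and> has_lcms_gcds (suffix_le G M) M \<and>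
     \<Delta> \<in> M \<and>
     {s\<in>M. prefix_le G M s \<Delta>} = {s\<in>M. suffix_le G M s \<Delta>} \<and>
     finite {s\<in>M. prefix_le G M s \<Delta>} \<and>
     (\<forall>x\<in>M. \<exists>xs. set xs \<subseteq> simples G M \<Delta> \<and> mprod G xs = x)"

definition ginf :: "('g, 'b) monoid_scheme \<Rightarrow> 'g set \<Rightarrow> 'g \<Rightarrow> 'g \<Rightarrow> int" where
  "ginf G M \<Delta> x = (GREATEST r::int. prefix_le G M (\<Delta> [^]\<^bsub>G\<^esub> r) x)"

definition gsup :: "('g, 'b) monoid_scheme \<Rightarrow> 'g set \<Rightarrow> 'g \<Rightarrow> 'g \<Rightarrow> int" where
  "gsup G M \<Delta> x = (LEAST r::int. prefix_le G M x (\<Delta> [^]\<^bsub>G\<^esub> r))"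

definition conjugates :: "('g, 'b) monoid_scheme \<Rightarrow> 'g \<Rightarrow> 'g set" where
  "conjugates G a = {inv\<^bsub>G\<^esub> c \<otimes>\<^bsub>G\<^esub> a \<otimes>\<^bsub>G\<^esub> c | c. c \<in> carrier G}"

definition summit_class :: "('g, 'b) monoid_scheme \<Rightarrow> 'g set \<Rightarrow> 'g \<Rightarrow> 'g \<Rightarrow> 'g set" where
  "summit_class G M \<Delta> a =
     {v \<in> conjugates G a.
        (\<forall>w\<in>conjugates G a. ginf G M \<Delta> w \<le> ginf G M \<Delta> v) \<and>
        (\<forall>w\<in>conjugates G a. gsup G M \<Delta> v \<le> gsup G M \<Delta> w)}"

definition summit_min_simples :: "('g, 'b) monoid_scheme \<Rightarrow> 'g set \<Rightarrow> 'g \<Rightarrow> 'g \<Rightarrow> 'g \<Rightarrow> 'g set" where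
  "summit_min_simples G M \<Delta> a v =
     (let T = {s \<in> simples G M \<Delta> - {\<one>\<^bsub>G\<^esub>}.
                 inv\<^bsub>G\<^esub> s \<otimes>\<^bsub>G\<^esub> v \<otimes>\<^bsub>G\<^esub> s \<in> summit_class G M \<Delta> a}
      in {s \<in> T. \<forall>t\<in>T. prefix_le G M t s \<longrightarrow> t = s})"

text \<open>The arrows of Gamma are the pairs (v, s) with v in C^sum(a), s in S^sum_v, going
from v to s^-1 v s with label s.
msg_walk G M Delta a x z g: there is a walk from x to z in the underlying
undirected graph whose image under p (product of labels, inverted for arrows
traversed backwards, in the order of traversal) is g.\<close>
inductive msg_walk :: "('g, 'b) monoid_scheme \<Rightarrow> 'g set \<Rightarrow> 'g \<Rightarrow> 'g \<Rightarrow> 'g \<Rightarrow> 'g \<Rightarrow> 'g \<Rightarrow> bool"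
  for G M \<Delta> a where
  nil: "x \<in> summit_class G M \<Delta> a \<Longrightarrow> msg_walk G M \<Delta> a x x \<one>\<^bsub>G\<^esub>"
| fwd: "\<lbrakk> x \<in> summit_class G M \<Delta> a; s \<in> summit_min_simples G M \<Delta> a x;
          msg_walk G M \<Delta> a (inv\<^bsub>G\<^esub> s \<otimes>\<^bsub>G\<^esub> x \<otimes>\<^bsub>G\<^esub> s) z g \<rbrakk>
        \<Longrightarrow> msg_walk G M \<Delta> a x z (s \<otimes>\<^bsub>G\<^esub> g)"
| bwd: "\<lbrakk> y \<in> summit_class G M \<Delta> a; s \<in> summit_min_simples G M \<Delta> a y;
          inv\<^bsub>G\<^esub> s \<otimes>\<^bsub>G\<^esub> y \<otimes>\<^bsub>G\<^esub> s = x; msg_walk G M \<Delta> a y z g \<rbrakk>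
        \<Longrightarrow> msg_walk G M \<Delta> a x z (inv\<^bsub>G\<^esub> s \<otimes>\<^bsub>G\<^esub> g)"

definition msg_loop_image :: "('g, 'b) monoid_scheme \<Rightarrow> 'g set \<Rightarrow> 'g \<Rightarrow> 'g \<Rightarrow> 'g \<Rightarrow> 'g set" where
  "msg_loop_image G M \<Delta> a a' = {g. msg_walk G M \<Delta> a a' a' g}"

end

theory Submission
  imports Defs
begin

locale GG =
  fixes G :: "('g, 'b) monoid_scheme" (structure) and M :: "'g set" and D :: 'g
  assumes gg: "garside_group G M D"
begin

lemma ggu: "group G \<and> submonoid M G \<and> generate G M = carrier G \<and> atomic_monoid G M \<and> has_lcms_gcds (prefix_le G M) M \<and> has_lcms_gcds (suffix_le G M) M \<and> D \<in> M \<and> {s\<in>M. prefix_le G M s D} = {s\<in>M. suffix_le G M s D} \<and> finite {s\<in>M. prefix_le G M s D} \<and> (\<forall>x\<in>M. \<exists>xs. set xs \<subseteq> simples G M D \<and> mprod G xs = x)"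
  using gg unfolding garside_group_def .
lemma grp: "group G" using ggu by (rule conjunct1)
sublocale group G by (rule grp)

lemma subm: "submonoid M G" using ggu[THEN conjunct2, THEN conjunct1] .
lemma M_car: "x \<in> M \<Longrightarrow> x \<in> carrier G" using submonoid.subset[OF subm] by (rule subsetD)
lemma M_one[simp]: "\<one> \<in> M" by (rule submonoid.one_closed[OF subm])
lemma M_mult[intro]: "x \<in> M \<Longrightarrow> y \<in> M \<Longrightarrow> x \<otimes> y \<in> M" by (rule submonoid.m_closed[OF subm])
lemma D_M: "D \<in> M" using ggu[THEN conjunct2, THEN conjunct2, THEN conjunct2, THEN conjunct2, THEN conjunct2, THEN conjunct2, THEN conjunct1] .
lemma D_car[simp]: "D \<in> carrier G" by (rule M_car[OF D_M])
lemma gen: "generate G M = carrier G" using ggu[THEN conjunct2, THEN conjunct2, THEN conjunct1] .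
lemma atom: "atomic_monoid G M" using ggu[THEN conjunct2, THEN conjunct2, THEN conjunct2, THEN conjunct1] .
lemma lg: "has_lcms_gcds (prefix_le G M) M" using ggu[THEN conjunct2, THEN conjunct2, THEN conjunct2, THEN conjunct2, THEN conjunct1] .
lemma simp_eq: "{s\<in>M. prefix_le G M s D} = {s\<in>M. suffix_le G M s D}" using ggu[THEN conjunct2, THEN conjunct2, THEN conjunct2, THEN conjunct2, THEN conjunct2, THEN conjunct2, THEN conjunct2, THEN conjunct1] .
lemma simp_fin: "finite (simples G M D)" unfolding simples_def using ggu[THEN conjunct2, THEN conjunct2, THEN conjunct2, THEN conjunct2, THEN conjunct2, THEN conjunct2, THEN conjunct2, THEN conjunct2, THEN conjunct1] .
lemma simp_gen0: "\<forall>x\<in>M. \<exists>xs. set xs \<subseteq> simples G M D \<and> mprod G xs = x" using ggu[THEN conjunct2, THEN conjunct2, THEN conjunct2, THEN conjunct2, THEN conjunct2, THEN conjunct2, THEN conjunct2, THEN conjunct2, THEN conjunct2] .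
lemma simp_gen: "x \<in> M \<Longrightarrow> \<exists>xs. set xs \<subseteq> simples G M D \<and> mprod G xs = x" using simp_gen0 by (rule bspec)

lemma mprod_Cons[simp]: "mprod G (x # xs) = x \<otimes> mprod G xs" by (simp add: mprod_def)
lemma mprod_Nil[simp]: "mprod G [] = \<one>" by (simp add: mprod_def)
lemma mprod_M: "set xs \<subseteq> M \<Longrightarrow> mprod G xs \<in> M" by (induction xs) auto
lemma mprod_car: "set xs \<subseteq> M \<Longrightarrow> mprod G xs \<in> carrier G" by (rule M_car[OF mprod_M])
lemma mprod_app: "set xs \<subseteq> M \<Longrightarrow> set ys \<subseteq> M \<Longrightarrow> mprod G (xs @ ys) = mprod G xs \<otimes> mprod G ys"
  by (induction xs) (auto simp: m_assoc mprod_car M_car)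

lemma unit_triv: assumes "m \<in> M" "inv m \<in> M" shows "m = \<one>"
proof (rule ccontr)
  assume ne: "m \<noteq> \<one>"
  have mc: "m \<in> carrier G" using assms M_car by blast
  have ne2: "inv m \<noteq> \<one>" using ne mc by simp
  obtain N where N: "\<forall>as. set as \<subseteq> M - {\<one>} \<and> mprod G as = \<one> \<longrightarrow> length as \<le> N"
    using bspec[OF atom[unfolded atomic_monoid_def] M_one] by (elim exE)
  define as where "as = concat (replicate (Suc N) [m, inv m])"
  have s: "set as \<subseteq> M - {\<one>}" using assms ne ne2 by (auto simp: as_def)
  have "\<And>k. mprod G (concat (replicate k [m, inv m])) = \<one>"
  proof -
    fix k show "mprod G (concat (replicate k [m, inv m])) = \<one>"
      by (induction k) (auto simp: mc m_assoc[symmetric])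
  qed
  then have "mprod G as = \<one>" unfolding as_def by blast
  with N s have "length as \<le> N" by blast
  moreover have "length as = 2 * Suc N" by (simp add: as_def length_concat sum_list_replicate)
  ultimately show False by simp
qed


lemma cancel1[simp]: "x \<in> carrier G \<Longrightarrow> y \<in> carrier G \<Longrightarrow> x \<otimes> (inv x \<otimes> y) = y"
  by (simp add: m_assoc[symmetric])
lemma cancel2[simp]: "x \<in> carrier G \<Longrightarrow> y \<in> carrier G \<Longrightarrow> inv x \<otimes> (x \<otimes> y) = y"
  by (simp add: m_assoc[symmetric])

lemma pl_iff: "prefix_le G M a b \<longleftrightarrow> inv a \<otimes> b \<in> M" by (simp add: prefix_le_def)

lemma pl_refl: "a \<in> carrier G \<Longrightarrow> prefix_le G M a a" by (simp add: pl_iff)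

lemma pl_trans: assumes "a \<in> carrier G" "b \<in> carrier G" "c \<in> carrier G"
  "prefix_le G M a b" "prefix_le G M b c" shows "prefix_le G M a c"
proof -
  have "inv a \<otimes> c = (inv a \<otimes> b) \<otimes> (inv b \<otimes> c)" using assms by (simp add: m_assoc)
  then show ?thesis using assms by (simp add: pl_iff M_mult)
qed

lemma pl_antisym: assumes "a \<in> carrier G" "b \<in> carrier G"
  "prefix_le G M a b" "prefix_le G M b a" shows "a = b"
proof -
  have "inv (inv a \<otimes> b) = inv b \<otimes> a" using assms by (simp add: inv_mult_group)
  then have "inv a \<otimes> b = \<one>" using assms unit_triv[of "inv a \<otimes> b"] by (simp add: pl_iff)
  then show ?thesis using assms by (metis cancel1 inv_closed r_one)
qed

lemma pl_left: assumes "a \<in> carrier G" "b \<in> carrier G" "c \<in> carrier G"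
  shows "prefix_le G M (c \<otimes> a) (c \<otimes> b) \<longleftrightarrow> prefix_le G M a b"
  using assms by (simp add: pl_iff inv_mult_group m_assoc)

lemma simples_M: "s \<in> simples G M D \<Longrightarrow> s \<in> M" by (simp add: simples_def)

lemma simple_conj1: assumes "s \<in> simples G M D" shows "inv D \<otimes> s \<otimes> D \<in> M"
proof -
  have sM: "s \<in> M" and sc: "s \<in> carrier G" using assms simples_M M_car by auto
  have s1: "inv s \<otimes> D \<in> M" using assms by (simp add: simples_def pl_iff)
  have "D \<otimes> inv (inv s \<otimes> D) = s" using sc by (simp add: inv_mult_group m_assoc)
  then have "inv s \<otimes> D \<in> {s\<in>M. suffix_le G M s D}" using s1 sM by (simp add: suffix_le_def)
  then have "inv s \<otimes> D \<in> {s\<in>M. prefix_le G M s D}" using simp_eq by simp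
  then have "inv (inv s \<otimes> D) \<otimes> D \<in> M" by (simp add: pl_iff)
  moreover have "inv (inv s \<otimes> D) \<otimes> D = inv D \<otimes> s \<otimes> D" using sc by (simp add: inv_mult_group m_assoc)
  ultimately show ?thesis by simp
qed

lemma simple_conj2: assumes "s \<in> simples G M D" shows "D \<otimes> s \<otimes> inv D \<in> M"
proof -
  have sM: "s \<in> M" and sc: "s \<in> carrier G" using assms simples_M M_car by auto
  have "s \<in> {s\<in>M. prefix_le G M s D}" using assms by (simp add: simples_def)
  then have "s \<in> {s\<in>M. suffix_le G M s D}" using simp_eq by simp
  then have s1: "D \<otimes> inv s \<in> M" by (simp add: suffix_le_def)
  have "inv (D \<otimes> inv s) \<otimes> D = s" using sc by (simp add: inv_mult_group m_assoc)
  then have "D \<otimes> inv s \<in> {s\<in>M. prefix_le G M s D}" using s1 sM by (simp add: pl_iff)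
  then have "D \<otimes> inv s \<in> {s\<in>M. suffix_le G M s D}" using simp_eq by simp
  then have "D \<otimes> inv (D \<otimes> inv s) \<in> M" by (simp add: suffix_le_def)
  moreover have "D \<otimes> inv (D \<otimes> inv s) = D \<otimes> s \<otimes> inv D" using sc by (simp add: inv_mult_group m_assoc)
  ultimately show ?thesis by simp
qed

lemma conj_list: assumes "set xs \<subseteq> simples G M D" "x \<in> carrier G"
  and "\<And>s. s \<in> simples G M D \<Longrightarrow> inv x \<otimes> s \<otimes> x \<in> M"
  shows "inv x \<otimes> mprod G xs \<otimes> x \<in> M"
  using assms(1)
proof (induction xs)
  case Nil then show ?case using assms(2) by simp
next
  case (Cons s xs)
  have sc: "s \<in> carrier G" using Cons.prems simples_M M_car by auto
  have rc: "mprod G xs \<in> carrier G" using Cons.prems simples_M by (intro mprod_car) auto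
  have "inv x \<otimes> mprod G (s # xs) \<otimes> x = (inv x \<otimes> s \<otimes> x) \<otimes> (inv x \<otimes> mprod G xs \<otimes> x)"
    using sc rc assms(2) by (simp add: m_assoc)
  moreover have "inv x \<otimes> s \<otimes> x \<in> M" using Cons.prems assms(3) by simp
  moreover have "inv x \<otimes> mprod G xs \<otimes> x \<in> M" using Cons by simp
  ultimately show ?case by (simp add: M_mult)
qed

lemma conjD_M: assumes "m \<in> M" shows "inv D \<otimes> m \<otimes> D \<in> M"
proof -
  obtain xs where "set xs \<subseteq> simples G M D" "mprod G xs = m" using simp_gen[OF assms] by (elim exE conjE)
  then show ?thesis using conj_list[of xs D] simple_conj1 by simp
qed

lemma Dconj_M: assumes "m \<in> M" shows "D \<otimes> m \<otimes> inv D \<in> M"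
proof -
  obtain xs where "set xs \<subseteq> simples G M D" "mprod G xs = m" using simp_gen[OF assms] by (elim exE conjE)
  then show ?thesis using conj_list[of xs "inv D"] simple_conj2 by simp
qed

lemma conjD_iff: assumes "h \<in> carrier G" shows "inv D \<otimes> h \<otimes> D \<in> M \<longleftrightarrow> h \<in> M"
proof
  assume "inv D \<otimes> h \<otimes> D \<in> M"
  then have "D \<otimes> (inv D \<otimes> h \<otimes> D) \<otimes> inv D \<in> M" by (rule Dconj_M)
  then show "h \<in> M" using assms by (simp add: m_assoc)
qed (rule conjD_M)

lemma conjP_iff: assumes "h \<in> carrier G" shows "inv (D [^] (n::nat)) \<otimes> h \<otimes> D [^] n \<in> M \<longleftrightarrow> h \<in> M"
proof (induction n)
  case 0 then show ?case using assms by simp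
next
  case (Suc n)
  have "inv (D [^] Suc n) \<otimes> h \<otimes> D [^] Suc n = inv D \<otimes> (inv (D [^] n) \<otimes> h \<otimes> D [^] n) \<otimes> D"
    using assms by (simp add: m_assoc inv_mult_group)
  then show ?case using Suc conjD_iff[of "inv (D [^] n) \<otimes> h \<otimes> D [^] n"] assms by simp
qed

lemma Pconj_iff: assumes "h \<in> carrier G" shows "D [^] (n::nat) \<otimes> h \<otimes> inv (D [^] n) \<in> M \<longleftrightarrow> h \<in> M"
proof -
  have "inv (D [^] n) \<otimes> (D [^] (n::nat) \<otimes> h \<otimes> inv (D [^] n)) \<otimes> D [^] n = h"
    using assms by (simp add: m_assoc)
  then show ?thesis using conjP_iff[of "D [^] (n::nat) \<otimes> h \<otimes> inv (D [^] n)" n] assms by simp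
qed

lemma conjI_iff: assumes "h \<in> carrier G" shows "inv (D [^] (p::int)) \<otimes> h \<otimes> D [^] p \<in> M \<longleftrightarrow> h \<in> M"
proof (cases "p < 0")
  case True
  then have "D [^] p = inv (D [^] nat (-p))" by (subst int_pow_def2) simp
  then show ?thesis using Pconj_iff[OF assms, of "nat (-p)"] by simp
next
  case False
  then have "D [^] p = D [^] nat p" using pow_nat[of p G D] by simp
  then show ?thesis using conjP_iff[OF assms, of "nat p"] by simp
qed

lemma Iconj_iff: assumes "h \<in> carrier G" shows "D [^] (p::int) \<otimes> h \<otimes> inv (D [^] p) \<in> M \<longleftrightarrow> h \<in> M"
  using conjI_iff[OF assms, of "-p"] by (simp add: int_pow_neg)

lemma DnM: "D [^] (n::nat) \<in> M"
  by (induction n) (auto simp: D_M)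

lemma simple_bound_list: assumes "set xs \<subseteq> simples G M D"
  shows "\<exists>N::nat. inv (mprod G xs) \<otimes> D [^] N \<in> M"
  using assms
proof (induction xs)
  case Nil then show ?case using DnM by auto
next
  case (Cons s xs)
  have sc: "s \<in> carrier G" using Cons.prems simples_M M_car by auto
  have rc: "mprod G xs \<in> carrier G" using Cons.prems simples_M by (intro mprod_car) auto
  obtain N :: nat where N: "inv (mprod G xs) \<otimes> D [^] N \<in> M" using Cons by auto
  have s1: "inv s \<otimes> D \<in> M" using Cons.prems by (simp add: simples_def pl_iff)
  have e: "inv (mprod G (s # xs)) \<otimes> D [^] Suc N
     = (inv (mprod G xs) \<otimes> D [^] N) \<otimes> (inv (D [^] N) \<otimes> (inv s \<otimes> D) \<otimes> D [^] N)"
    unfolding nat_pow_Suc2[OF D_car] using sc rc by (simp add: m_assoc inv_mult_group)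
  have "inv (D [^] N) \<otimes> (inv s \<otimes> D) \<otimes> D [^] N \<in> M" using s1 conjP_iff[of "inv s \<otimes> D" N] sc by simp
  then have "inv (mprod G (s # xs)) \<otimes> D [^] Suc N \<in> M" using e N by (simp add: M_mult)
  then show ?case by (rule exI)
qed

lemma simple_bound: assumes "m \<in> M" shows "\<exists>N::nat. inv m \<otimes> D [^] N \<in> M"
proof -
  obtain xs where "set xs \<subseteq> simples G M D" "mprod G xs = m" using simp_gen[OF assms] by (elim exE conjE)
  then show ?thesis using simple_bound_list[of xs] by simp
qed


lemma decomp0: assumes "g \<in> generate G M" shows "\<exists>n::nat. \<exists>m\<in>M. g = inv (D [^] n) \<otimes> m"
  using assms
proof (induction rule: generate.induct)
  case one
  have "\<one> = inv (D [^] (0::nat)) \<otimes> \<one>" by simp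
  then show ?case using M_one by blast
next
  case (incl h)
  have "h = inv (D [^] (0::nat)) \<otimes> h" using incl M_car by simp
  then show ?case using incl by blast
next
  case (inv h)
  have hc: "h \<in> carrier G" using inv M_car by simp
  obtain N :: nat where N: "inv h \<otimes> D [^] N \<in> M" using simple_bound[OF inv] by (elim exE)
  have "D [^] N \<otimes> (inv h \<otimes> D [^] N) \<otimes> inv (D [^] N) \<in> M" using N Pconj_iff[of "inv h \<otimes> D [^] N" N] hc by simp
  moreover have "inv h = inv (D [^] N) \<otimes> (D [^] N \<otimes> (inv h \<otimes> D [^] N) \<otimes> inv (D [^] N))"
    using hc by (simp add: m_assoc)
  ultimately show ?case by blast
next
  case (eng h1 h2)
  obtain a m1 where a: "m1 \<in> M" "h1 = inv (D [^] (a::nat)) \<otimes> m1" using eng.IH(1) by blast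
  obtain b m2 where b: "m2 \<in> M" "h2 = inv (D [^] (b::nat)) \<otimes> m2" using eng.IH(2) by blast
  have c1: "m1 \<in> carrier G" "m2 \<in> carrier G" using a b M_car by auto
  have m1': "D [^] b \<otimes> m1 \<otimes> inv (D [^] b) \<in> M" using Pconj_iff[of m1 b] c1 a by simp
  have pw: "D [^] b \<otimes> D [^] a = D [^] (b + a)" by (simp add: nat_pow_mult)
  have "h1 \<otimes> h2 = inv (D [^] b \<otimes> D [^] a) \<otimes> ((D [^] b \<otimes> m1 \<otimes> inv (D [^] b)) \<otimes> m2)"
    using a b c1 by (simp add: m_assoc inv_mult_group)
  then have "h1 \<otimes> h2 = inv (D [^] (b + a)) \<otimes> ((D [^] b \<otimes> m1 \<otimes> inv (D [^] b)) \<otimes> m2)" using pw by simp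
  moreover have "(D [^] b \<otimes> m1 \<otimes> inv (D [^] b)) \<otimes> m2 \<in> M" using m1' b by (simp add: M_mult)
  ultimately show ?case by blast
qed

lemma decomp: "g \<in> carrier G \<Longrightarrow> \<exists>n::nat. \<exists>m\<in>M. g = inv (D [^] n) \<otimes> m"
  using decomp0 gen by simp

lemma D1_triv: assumes "D = \<one>" "m \<in> M" shows "m = \<one>"
proof -
  obtain xs where xs: "set xs \<subseteq> simples G M D" "mprod G xs = m" using simp_gen[OF assms(2)] by (elim exE conjE)
  have "\<forall>s\<in>set xs. s = \<one>"
  proof
    fix s assume "s \<in> set xs"
    then have "s \<in> M" "inv s \<otimes> D \<in> M" using xs by (auto simp: simples_def pl_iff)
    then show "s = \<one>" using assms(1) unit_triv M_car by simp
  qed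
  then have "mprod G xs = \<one>" by (induction xs) auto
  then show ?thesis using xs by simp
qed

lemma pow_div: "inv (D [^] (a::int)) \<otimes> D [^] (b::int) = D [^] (b - a)"
proof -
  have "D [^] (-a + b) = D [^] (-a) \<otimes> D [^] b" by (rule int_pow_mult) simp
  then show ?thesis by (simp add: int_pow_neg)
qed

lemma DpM: "(r::int) \<ge> 0 \<Longrightarrow> D [^] r \<in> M"
  using pow_nat[of r G D] DnM[of "nat r"] by simp

lemma Dneg_notM: assumes "D \<noteq> \<one>" "D [^] (r::int) \<in> M" shows "r \<ge> 0"
proof (rule ccontr)
  assume "\<not> r \<ge> 0"
  then have "-r - 1 \<ge> 0" by simp
  then have m2: "D [^] (-r - 1) \<in> M" using DpM by simp
  have "D [^] (r + (-r - 1)) = D [^] r \<otimes> D [^] (-r - 1)" by (rule int_pow_mult) simp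
  then have "D [^] (-1::int) \<in> M" using assms(2) m2 M_mult by simp
  moreover have "D [^] (-1::int) = inv D" using int_pow_neg[of D 1] by simp
  ultimately have "inv D \<in> M" by simp
  then show False using unit_triv[OF D_M] assms(1) by simp
qed

lemma ex_lower: assumes "y \<in> carrier G" shows "\<exists>r::int. prefix_le G M (D [^] r) y"
proof -
  obtain n m where "m \<in> M" "y = inv (D [^] (n::nat)) \<otimes> m" using decomp[OF assms] by blast
  then have "inv (D [^] (- int n)) \<otimes> y = m" using M_car by (simp add: int_pow_neg_int)
  then show ?thesis using \<open>m \<in> M\<close> pl_iff by metis
qed

lemma ex_upper: assumes "y \<in> carrier G" shows "\<exists>r::int. prefix_le G M y (D [^] r)"
proof -
  obtain n m where nm: "m \<in> M" "y = inv (D [^] (n::nat)) \<otimes> m" using decomp[OF assms] by blast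
  obtain K :: nat where K: "inv m \<otimes> D [^] K \<in> M" using simple_bound[OF nm(1)] by (elim exE)
  have mc: "m \<in> carrier G" using nm M_car by simp
  have "inv y \<otimes> D [^] K = (inv m \<otimes> D [^] K) \<otimes> D [^] n"
    using nm mc nat_pow_comm[of D n K] by (simp add: m_assoc inv_mult_group)
  then have "inv y \<otimes> D [^] (int K) \<in> M" using K DnM by (simp add: int_pow_int M_mult)
  then show ?thesis using pl_iff by metis
qed

lemma pow_le: "prefix_le G M (D [^] (a::int)) (D [^] b) \<longleftrightarrow> D [^] (b - a) \<in> M"
  by (simp add: pl_iff pow_div)

lemma low_le_up: assumes "D \<noteq> \<one>" "y \<in> carrier G" "prefix_le G M (D [^] (r::int)) y" "prefix_le G M y (D [^] (q::int))"
  shows "r \<le> q"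
proof -
  have "prefix_le G M (D [^] r) (D [^] q)" using pl_trans[of "D [^] r" y "D [^] q"] assms by simp
  then show ?thesis using Dneg_notM[OF assms(1)] pow_le by force
qed

lemma low_down: assumes "y \<in> carrier G" "prefix_le G M (D [^] r) y" "(r'::int) \<le> r"
  shows "prefix_le G M (D [^] r') y"
proof -
  have "prefix_le G M (D [^] r') (D [^] r)" using pow_le DpM assms(3) by simp
  then show ?thesis using pl_trans[of "D [^] r'" "D [^] r" y] assms by simp
qed

lemma up_up: assumes "y \<in> carrier G" "prefix_le G M y (D [^] q)" "(q::int) \<le> q'"
  shows "prefix_le G M y (D [^] q')"
proof -
  have "prefix_le G M (D [^] q) (D [^] q')" using pow_le DpM assms(3) by simp
  then show ?thesis using pl_trans[of y "D [^] q" "D [^] q'"] assms by simp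
qed

lemma ginf_char: assumes "D \<noteq> \<one>" "y \<in> carrier G"
  shows "p \<le> ginf G M D y \<longleftrightarrow> prefix_le G M (D [^] p) y"
proof -
  define P where "P = (\<lambda>r::int. prefix_le G M (D [^] r) y)"
  obtain r0 :: int where r0: "P r0" using ex_lower[OF assms(2)] P_def by blast
  obtain N :: int where N: "prefix_le G M y (D [^] N)" using ex_upper[OF assms(2)] by blast
  have bnd: "\<And>r. P r \<Longrightarrow> r \<le> N" using low_le_up[OF assms(1,2)] N P_def by blast
  define S where "S = {r. P r \<and> r0 \<le> r}"
  have fS: "finite S" by (rule finite_subset[of _ "{r0..N}"]) (auto simp: S_def bnd)
  have neS: "S \<noteq> {}" using r0 S_def by auto
  define g where "g = Max S"
  have gS: "g \<in> S" using Max_in[OF fS neS] g_def by simp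
  have gmax: "\<And>r. P r \<Longrightarrow> r \<le> g"
  proof -
    fix r assume "P r"
    show "r \<le> g"
    proof (cases "r0 \<le> r")
      case True then show ?thesis using \<open>P r\<close> fS g_def S_def by simp
    next
      case False then show ?thesis using gS S_def by simp
    qed
  qed
  have "ginf G M D y = g" unfolding ginf_def P_def[symmetric]
    by (rule Greatest_equality) (use gS S_def gmax in auto)
  then show ?thesis using gmax gS S_def low_down[OF assms(2)] P_def by auto
qed

lemma gsup_char: assumes "D \<noteq> \<one>" "y \<in> carrier G"
  shows "gsup G M D y \<le> q \<longleftrightarrow> prefix_le G M y (D [^] q)"
proof -
  define P where "P = (\<lambda>r::int. prefix_le G M y (D [^] r))"
  obtain r0 :: int where r0: "prefix_le G M (D [^] r0) y" using ex_lower[OF assms(2)] by blast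
  obtain N :: int where N: "P N" using ex_upper[OF assms(2)] P_def by blast
  have bnd: "\<And>r. P r \<Longrightarrow> r0 \<le> r" using low_le_up[OF assms(1,2)] r0 P_def by blast
  define S where "S = {r. P r \<and> r \<le> N}"
  have fS: "finite S" by (rule finite_subset[of _ "{r0..N}"]) (auto simp: S_def bnd)
  have neS: "S \<noteq> {}" using N S_def by auto
  define g where "g = Min S"
  have gS: "g \<in> S" using Min_in[OF fS neS] g_def by simp
  have gmin: "\<And>r. P r \<Longrightarrow> g \<le> r"
  proof -
    fix r assume "P r"
    show "g \<le> r"
    proof (cases "r \<le> N")
      case True then show ?thesis using \<open>P r\<close> fS g_def S_def by simp
    next
      case False then show ?thesis using gS S_def by simp
    qed
  qed
  have "gsup G M D y = g" unfolding gsup_def P_def[symmetric]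
    by (rule Least_equality) (use gS S_def gmin in auto)
  then show ?thesis using gmin gS S_def up_up[OF assms(2)] P_def by auto
qed

lemma gcdG: assumes "u \<in> M" "v \<in> M"
  shows "\<exists>w\<in>M. prefix_le G M w u \<and> prefix_le G M w v \<and>
     (\<forall>k\<in>carrier G. prefix_le G M k u \<longrightarrow> prefix_le G M k v \<longrightarrow> prefix_le G M k w)"
proof -
  have gcd: "\<And>a b. a \<in> M \<Longrightarrow> b \<in> M \<Longrightarrow> \<exists>c\<in>M. prefix_le G M c a \<and> prefix_le G M c b \<and>
      (\<forall>d\<in>M. prefix_le G M d a \<and> prefix_le G M d b \<longrightarrow> prefix_le G M d c)"
    using lg unfolding has_lcms_gcds_def by blast
  obtain w where w: "w \<in> M" "prefix_le G M w u" "prefix_le G M w v"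
    "\<forall>d\<in>M. prefix_le G M d u \<and> prefix_le G M d v \<longrightarrow> prefix_le G M d w"
    using gcd[OF assms] by blast
  have "prefix_le G M k w" if kc: "k \<in> carrier G" and ku: "prefix_le G M k u" and kv: "prefix_le G M k v" for k
  proof -
    obtain n m where nm: "m \<in> M" "k = inv (D [^] (n::nat)) \<otimes> m" using decomp[OF kc] by blast
    have mc: "m \<in> carrier G" using nm M_car by simp
    have uc: "u \<in> carrier G" "v \<in> carrier G" "w \<in> carrier G" using assms w M_car by auto
    have UM: "D [^] n \<otimes> u \<in> M" "D [^] n \<otimes> v \<in> M" using DnM assms by (auto simp: M_mult)
    obtain d where d: "d \<in> M" "prefix_le G M d (D [^] n \<otimes> u)" "prefix_le G M d (D [^] n \<otimes> v)"
      "\<forall>x\<in>M. prefix_le G M x (D [^] n \<otimes> u) \<and> prefix_le G M x (D [^] n \<otimes> v) \<longrightarrow> prefix_le G M x d"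
      using gcd[OF UM] by blast
    have dc: "d \<in> carrier G" using d M_car by simp
    have ik: "inv k = inv m \<otimes> D [^] n" using nm mc by (simp add: inv_mult_group)
    have "prefix_le G M m (D [^] n \<otimes> u)" using ku ik mc uc by (simp add: pl_iff m_assoc)
    moreover have "prefix_le G M m (D [^] n \<otimes> v)" using kv ik mc uc by (simp add: pl_iff m_assoc)
    ultimately have md: "prefix_le G M m d" using d nm by blast
    have "prefix_le G M (D [^] n) (D [^] n \<otimes> u)" "prefix_le G M (D [^] n) (D [^] n \<otimes> v)"
      using assms uc by (simp_all add: pl_iff)
    then have "prefix_le G M (D [^] n) d" using d DnM by blast
    then have eM: "inv (D [^] n) \<otimes> d \<in> M" by (simp add: pl_iff)
    define e where "e = inv (D [^] n) \<otimes> d"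
    have ec: "e \<in> carrier G" using e_def dc by simp
    have de: "d = D [^] n \<otimes> e" using e_def dc by simp
    have "prefix_le G M e u" using d(2) de pl_left[of e u "D [^] n"] ec uc by simp
    moreover have "prefix_le G M e v" using d(3) de pl_left[of e v "D [^] n"] ec uc by simp
    ultimately have "prefix_le G M e w" using w(4) eM e_def by blast
    then have "prefix_le G M d (D [^] n \<otimes> w)" using de pl_left[of e w "D [^] n"] ec uc by simp
    then have "prefix_le G M m (D [^] n \<otimes> w)" using md pl_trans[of m d "D [^] n \<otimes> w"] mc dc uc by simp
    then show ?thesis using ik mc uc by (simp add: pl_iff m_assoc)
  qed
  then show ?thesis using w by blast
qed


lemma pow_comm: "D [^] (i::int) \<otimes> D [^] (j::int) = D [^] j \<otimes> D [^] i"
proof -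
  have "D [^] (i + j) = D [^] i \<otimes> D [^] j" by (rule int_pow_mult) simp
  moreover have "D [^] (j + i) = D [^] j \<otimes> D [^] i" by (rule int_pow_mult) simp
  ultimately show ?thesis by (simp add: add.commute)
qed

lemma inv_pow_comm: "inv (D [^] (i::int)) \<otimes> D [^] (j::int) = D [^] j \<otimes> inv (D [^] i)"
  using pow_comm[of "-i" j] by (simp add: int_pow_neg)

lemma tau_low: assumes "x \<in> carrier G"
  shows "prefix_le G M (D [^] (r::int)) (D [^] (p::int) \<otimes> x \<otimes> inv (D [^] p)) \<longleftrightarrow> prefix_le G M (D [^] r) x"
proof -
  have "inv (D [^] r) \<otimes> (D [^] p \<otimes> x \<otimes> inv (D [^] p)) = D [^] p \<otimes> (inv (D [^] r) \<otimes> x) \<otimes> inv (D [^] p)"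
    using assms inv_pow_comm[of r p] by (simp add: m_assoc[symmetric])
  then show ?thesis using Iconj_iff[of "inv (D [^] r) \<otimes> x" p] assms by (simp add: pl_iff)
qed

lemma tau_up: assumes "x \<in> carrier G"
  shows "prefix_le G M (D [^] (p::int) \<otimes> x \<otimes> inv (D [^] p)) (D [^] (r::int)) \<longleftrightarrow> prefix_le G M x (D [^] r)"
proof -
  have "inv (D [^] p \<otimes> x \<otimes> inv (D [^] p)) \<otimes> D [^] r = D [^] p \<otimes> (inv x \<otimes> D [^] r) \<otimes> inv (D [^] p)"
    using assms inv_pow_comm[of p r] by (simp add: m_assoc inv_mult_group)
  then show ?thesis using Iconj_iff[of "inv x \<otimes> D [^] r" p] assms by (simp add: pl_iff)
qed

lemma tau_ginf: "x \<in> carrier G \<Longrightarrow> ginf G M D (D [^] (p::int) \<otimes> x \<otimes> inv (D [^] p)) = ginf G M D x"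
  unfolding ginf_def using tau_low by simp

lemma tau_gsup: "x \<in> carrier G \<Longrightarrow> gsup G M D (D [^] (p::int) \<otimes> x \<otimes> inv (D [^] p)) = gsup G M D x"
  unfolding gsup_def using tau_up by simp

lemma conj_car: "a \<in> carrier G \<Longrightarrow> x \<in> conjugates G a \<Longrightarrow> x \<in> carrier G"
  by (auto simp: conjugates_def)

lemma conj_trans: assumes "a \<in> carrier G" "x \<in> conjugates G a" "c \<in> carrier G"
  shows "inv c \<otimes> x \<otimes> c \<in> conjugates G a"
proof -
  obtain d where d: "d \<in> carrier G" "x = inv d \<otimes> a \<otimes> d" using assms(2) by (auto simp: conjugates_def)
  have "inv c \<otimes> x \<otimes> c = inv (d \<otimes> c) \<otimes> a \<otimes> (d \<otimes> c)" using d assms by (simp add: m_assoc inv_mult_group)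
  then show ?thesis using d assms unfolding conjugates_def by blast
qed

lemma CS_car: "a \<in> carrier G \<Longrightarrow> x \<in> summit_class G M D a \<Longrightarrow> x \<in> carrier G"
  by (auto simp: summit_class_def conj_car)

lemma CS_intro: assumes "x \<in> summit_class G M D a" "y \<in> conjugates G a"
  "ginf G M D x \<le> ginf G M D y" "gsup G M D y \<le> gsup G M D x"
  shows "y \<in> summit_class G M D a"
  using assms unfolding summit_class_def by force

lemma CS_eq: assumes "x \<in> summit_class G M D a" "y \<in> summit_class G M D a"
  shows "ginf G M D x = ginf G M D y \<and> gsup G M D x = gsup G M D y"
  using assms unfolding summit_class_def by force

lemma CS_tau: assumes "a \<in> carrier G" "x \<in> summit_class G M D a"
  shows "D [^] (p::int) \<otimes> x \<otimes> inv (D [^] p) \<in> summit_class G M D a"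
proof -
  have xc: "x \<in> carrier G" using CS_car assms by blast
  have xconj: "x \<in> conjugates G a" using assms by (simp add: summit_class_def)
  have "inv (inv (D [^] p)) \<otimes> x \<otimes> inv (D [^] p) \<in> conjugates G a"
    using conj_trans[OF assms(1) xconj, of "inv (D [^] p)"] by simp
  then have "D [^] p \<otimes> x \<otimes> inv (D [^] p) \<in> conjugates G a" by simp
  then show ?thesis using CS_intro[OF assms(2)] tau_ginf[OF xc] tau_gsup[OF xc] by simp
qed

lemma convex: assumes D1: "D \<noteq> \<one>" and ac: "a \<in> carrier G" and xS: "x \<in> summit_class G M D a"
  and uM: "u \<in> M" and vM: "v \<in> M" and wM: "w \<in> M"
  and uS: "inv u \<otimes> x \<otimes> u \<in> summit_class G M D a" and vS: "inv v \<otimes> x \<otimes> v \<in> summit_class G M D a"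
  and wu: "prefix_le G M w u" and wv: "prefix_le G M w v"
  and wg: "\<forall>k\<in>carrier G. prefix_le G M k u \<longrightarrow> prefix_le G M k v \<longrightarrow> prefix_le G M k w"
  shows "inv w \<otimes> x \<otimes> w \<in> summit_class G M D a"
proof -
  define p where "p = ginf G M D x"
  define q where "q = gsup G M D x"
  have xc: "x \<in> carrier G" using CS_car ac xS by blast
  have uc: "u \<in> carrier G" and vc: "v \<in> carrier G" and wc: "w \<in> carrier G" using uM vM wM M_car by auto
  have ycu: "inv u \<otimes> x \<otimes> u \<in> carrier G" and ycv: "inv v \<otimes> x \<otimes> v \<in> carrier G"
    using xc uc vc by auto
  have ywc: "inv w \<otimes> x \<otimes> w \<in> carrier G" using xc wc by simp
  have pu: "prefix_le G M (D [^] p) (inv u \<otimes> x \<otimes> u)"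
    using ginf_char[OF D1 ycu, of p] CS_eq[OF xS uS] p_def by simp
  have pv: "prefix_le G M (D [^] p) (inv v \<otimes> x \<otimes> v)"
    using ginf_char[OF D1 ycv, of p] CS_eq[OF xS vS] p_def by simp
  have qu: "prefix_le G M (inv u \<otimes> x \<otimes> u) (D [^] q)"
    using gsup_char[OF D1 ycu, of q] CS_eq[OF xS uS] q_def by simp
  have qv: "prefix_le G M (inv v \<otimes> x \<otimes> v) (D [^] q)"
    using gsup_char[OF D1 ycv, of q] CS_eq[OF xS vS] q_def by simp
  have infgen: "prefix_le G M (inv x \<otimes> w \<otimes> D [^] p) y"
    if yM: "y \<in> M" and wy: "prefix_le G M w y" and py: "prefix_le G M (D [^] p) (inv y \<otimes> x \<otimes> y)" for y
  proof -
    have yc: "y \<in> carrier G" using yM M_car by simp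
    have e1: "inv (inv x \<otimes> w \<otimes> D [^] p) \<otimes> (inv x \<otimes> y \<otimes> D [^] p) = inv (D [^] p) \<otimes> (inv w \<otimes> y) \<otimes> D [^] p"
      using xc wc yc by (simp add: m_assoc inv_mult_group)
    have "inv w \<otimes> y \<in> M" using wy by (simp add: pl_iff)
    then have k1: "prefix_le G M (inv x \<otimes> w \<otimes> D [^] p) (inv x \<otimes> y \<otimes> D [^] p)"
      using e1 conjI_iff[of "inv w \<otimes> y" p] wc yc by (simp add: pl_iff)
    have e2: "inv (inv x \<otimes> y \<otimes> D [^] p) \<otimes> y = inv (D [^] p) \<otimes> (inv y \<otimes> x \<otimes> y)"
      using xc yc by (simp add: m_assoc inv_mult_group)
    have k2: "prefix_le G M (inv x \<otimes> y \<otimes> D [^] p) y" using py e2 by (simp add: pl_iff)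
    show ?thesis using pl_trans[OF _ _ _ k1 k2] xc wc yc by simp
  qed
  have "prefix_le G M (inv x \<otimes> w \<otimes> D [^] p) w"
    using wg infgen[OF uM wu pu] infgen[OF vM wv pv] xc wc by simp
  moreover have "inv (inv x \<otimes> w \<otimes> D [^] p) \<otimes> w = inv (D [^] p) \<otimes> (inv w \<otimes> x \<otimes> w)"
    using xc wc by (simp add: m_assoc inv_mult_group)
  ultimately have pw: "prefix_le G M (D [^] p) (inv w \<otimes> x \<otimes> w)" by (simp add: pl_iff)
  have supgen: "prefix_le G M (x \<otimes> w \<otimes> inv (D [^] q)) y"
    if yM: "y \<in> M" and wy: "prefix_le G M w y" and qy: "prefix_le G M (inv y \<otimes> x \<otimes> y) (D [^] q)" for y
  proof -
    have yc: "y \<in> carrier G" using yM M_car by simp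
    have "inv w \<otimes> y \<in> M" using wy by (simp add: pl_iff)
    moreover have "inv (inv y \<otimes> x \<otimes> y) \<otimes> D [^] q \<in> M" using qy by (simp add: pl_iff)
    ultimately have "(inv w \<otimes> y) \<otimes> (inv (inv y \<otimes> x \<otimes> y) \<otimes> D [^] q) \<in> M" by (simp add: M_mult)
    moreover have "(inv w \<otimes> y) \<otimes> (inv (inv y \<otimes> x \<otimes> y) \<otimes> D [^] q) = inv w \<otimes> inv x \<otimes> y \<otimes> D [^] q"
      using xc wc yc by (simp add: m_assoc inv_mult_group)
    ultimately have h: "inv w \<otimes> inv x \<otimes> y \<otimes> D [^] q \<in> M" by simp
    have "D [^] q \<otimes> (inv w \<otimes> inv x \<otimes> y \<otimes> D [^] q) \<otimes> inv (D [^] q) = inv (x \<otimes> w \<otimes> inv (D [^] q)) \<otimes> y"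
      using xc wc yc by (simp add: m_assoc inv_mult_group)
    then show ?thesis using h Iconj_iff[of "inv w \<otimes> inv x \<otimes> y \<otimes> D [^] q" q] xc wc yc by (simp add: pl_iff)
  qed
  have "prefix_le G M (x \<otimes> w \<otimes> inv (D [^] q)) w"
    using wg supgen[OF uM wu qu] supgen[OF vM wv qv] xc wc by simp
  then have h2: "inv (x \<otimes> w \<otimes> inv (D [^] q)) \<otimes> w \<in> M" by (simp add: pl_iff)
  have "D [^] q \<otimes> (inv (inv w \<otimes> x \<otimes> w) \<otimes> D [^] q) \<otimes> inv (D [^] q) = inv (x \<otimes> w \<otimes> inv (D [^] q)) \<otimes> w"
    using xc wc by (simp add: m_assoc inv_mult_group)
  then have "inv (inv w \<otimes> x \<otimes> w) \<otimes> D [^] q \<in> M"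
    using h2 Iconj_iff[of "inv (inv w \<otimes> x \<otimes> w) \<otimes> D [^] q" q] xc wc by simp
  then have qw: "prefix_le G M (inv w \<otimes> x \<otimes> w) (D [^] q)" by (simp add: pl_iff)
  have conj: "inv w \<otimes> x \<otimes> w \<in> conjugates G a"
    using conj_trans[OF ac _ wc] xS by (simp add: summit_class_def)
  show ?thesis
    using CS_intro[OF xS conj] ginf_char[OF D1 ywc, of p] gsup_char[OF D1 ywc, of q] pw qw p_def q_def by simp
qed


definition bnd :: "'g \<Rightarrow> nat \<Rightarrow> bool" where
  "bnd u N \<longleftrightarrow> (\<forall>as. set as \<subseteq> M - {\<one>} \<and> mprod G as = u \<longrightarrow> length as \<le> N)"

definition B :: "'g \<Rightarrow> nat" where "B u = (LEAST N. bnd u N)"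

lemma B_ok: assumes "u \<in> M" shows "bnd u (B u)"
proof -
  have "\<exists>N. bnd u N" using bspec[OF atom[unfolded atomic_monoid_def] assms] by (simp add: bnd_def)
  then show ?thesis unfolding B_def by (rule LeastI_ex)
qed

lemma some_fact: assumes "u \<in> M" shows "\<exists>as. set as \<subseteq> M - {\<one>} \<and> mprod G as = u"
proof (cases "u = \<one>")
  case True then show ?thesis by (intro exI[of _ "[]"]) simp
next
  case False then show ?thesis using assms M_car by (intro exI[of _ "[u]"]) simp
qed

lemma B_dec_left: assumes "t \<in> M" "t \<noteq> \<one>" "u \<in> M" shows "B u < B (t \<otimes> u)"
proof -
  have tc: "t \<in> carrier G" using assms M_car by simp
  have b: "bnd (t \<otimes> u) (B (t \<otimes> u))" using B_ok assms M_mult by simp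
  have step: "length as + 1 \<le> B (t \<otimes> u)" if "set as \<subseteq> M - {\<one>}" "mprod G as = u" for as
  proof -
    have "set (t # as) \<subseteq> M - {\<one>}" "mprod G (t # as) = t \<otimes> u" using that assms by auto
    then show ?thesis using b unfolding bnd_def by fastforce
  qed
  obtain as0 where "set as0 \<subseteq> M - {\<one>}" "mprod G as0 = u" using some_fact[OF assms(3)] by blast
  then have pos: "1 \<le> B (t \<otimes> u)" using step by fastforce
  have "bnd u (B (t \<otimes> u) - 1)" unfolding bnd_def using step by fastforce
  then have "B u \<le> B (t \<otimes> u) - 1" unfolding B_def by (rule Least_le)
  then show ?thesis using pos by simp
qed

lemma B_dec_right: assumes "t \<in> M" "e \<in> M" "e \<noteq> \<one>" shows "B t < B (t \<otimes> e)"
proof -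
  have b: "bnd (t \<otimes> e) (B (t \<otimes> e))" using B_ok assms M_mult by simp
  have step: "length as + 1 \<le> B (t \<otimes> e)" if "set as \<subseteq> M - {\<one>}" "mprod G as = t" for as
  proof -
    have "set (as @ [e]) \<subseteq> M - {\<one>}" using that assms by auto
    moreover have "mprod G (as @ [e]) = t \<otimes> e" using that assms mprod_app[of as "[e]"] M_car by auto
    ultimately show ?thesis using b unfolding bnd_def by fastforce
  qed
  obtain as0 where "set as0 \<subseteq> M - {\<one>}" "mprod G as0 = t" using some_fact[OF assms(1)] by blast
  then have pos: "1 \<le> B (t \<otimes> e)" using step by fastforce
  have "bnd t (B (t \<otimes> e) - 1)" unfolding bnd_def using step by fastforce
  then have "B t \<le> B (t \<otimes> e) - 1" unfolding B_def by (rule Least_le)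
  then show ?thesis using pos by simp
qed

lemma min_exists: assumes xS: "x \<in> summit_class G M D a"
  and s0: "s0 \<in> simples G M D - {\<one>}" "inv s0 \<otimes> x \<otimes> s0 \<in> summit_class G M D a"
  shows "\<exists>t\<in>summit_min_simples G M D a x. prefix_le G M t s0"
proof -
  define T where "T = {s \<in> simples G M D - {\<one>}. inv s \<otimes> x \<otimes> s \<in> summit_class G M D a}"
  define Q where "Q = (\<lambda>t. t \<in> T \<and> prefix_le G M t s0)"
  have s0c: "s0 \<in> carrier G" using s0 simples_M M_car by auto
  have "Q s0" using s0 s0c pl_refl unfolding Q_def T_def by simp
  then obtain t where t: "Q t" and tmin: "\<forall>y. Q y \<longrightarrow> B t \<le> B y" using ex_has_least_nat[of Q s0 B] by blast
  have tT: "t \<in> T" and ts0: "prefix_le G M t s0" using t Q_def by auto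
  have tc: "t \<in> carrier G" and tM: "t \<in> M" using tT T_def simples_M M_car by auto
  have "t' = t" if t'T: "t' \<in> T" and t't: "prefix_le G M t' t" for t'
  proof (rule ccontr)
    assume ne: "t' \<noteq> t"
    have t'c: "t' \<in> carrier G" and t'M: "t' \<in> M" using t'T T_def simples_M M_car by auto
    define e where "e = inv t' \<otimes> t"
    have eM: "e \<in> M" using t't e_def by (simp add: pl_iff)
    have te: "t = t' \<otimes> e" using e_def t'c tc by simp
    have "e \<noteq> \<one>" using te ne t'c by auto
    then have "B t' < B t" using B_dec_right[OF t'M eM] te by simp
    moreover have "Q t'" using t'T pl_trans[OF t'c tc s0c t't ts0] Q_def by simp
    ultimately show False using tmin by fastforce
  qed
  then have "t \<in> summit_min_simples G M D a x" using tT unfolding summit_min_simples_def T_def Let_def by blast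
  then show ?thesis using ts0 by blast
qed

lemma nontriv_prefix_list: assumes "set xs \<subseteq> simples G M D" "mprod G xs \<noteq> \<one>"
  shows "\<exists>s\<in>simples G M D. s \<noteq> \<one> \<and> prefix_le G M s (mprod G xs)"
  using assms
proof (induction xs)
  case Nil then show ?case by simp
next
  case (Cons s xs)
  have sc: "s \<in> carrier G" using Cons.prems simples_M M_car by auto
  have rM: "mprod G xs \<in> M" using Cons.prems simples_M by (intro mprod_M) auto
  show ?case
  proof (cases "s = \<one>")
    case True
    then show ?thesis using Cons rM M_car by auto
  next
    case False
    have "prefix_le G M s (s \<otimes> mprod G xs)" using sc rM M_car by (simp add: pl_iff)
    then show ?thesis using False Cons.prems by auto
  qed
qed

lemma nontriv_prefix: assumes "u \<in> M" "u \<noteq> \<one>"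
  shows "\<exists>s\<in>simples G M D. s \<noteq> \<one> \<and> prefix_le G M s u"
proof -
  obtain xs where "set xs \<subseteq> simples G M D" "mprod G xs = u" using simp_gen[OF assms(1)] by (elim exE conjE)
  then show ?thesis using nontriv_prefix_list assms by blast
qed

lemma min_simples_sub: "s \<in> summit_min_simples G M D a x \<Longrightarrow>
   s \<in> simples G M D \<and> s \<noteq> \<one> \<and> inv s \<otimes> x \<otimes> s \<in> summit_class G M D a"
  unfolding summit_min_simples_def Let_def by blast

lemma walk_prop: assumes "a \<in> carrier G" shows
  "msg_walk G M D a x z g \<Longrightarrow> g \<in> carrier G \<and> x \<in> carrier G \<and> z = inv g \<otimes> x \<otimes> g"
proof (induction rule: msg_walk.induct)
  case (nil x) then show ?case using CS_car assms by auto
next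
  case (fwd x s z g)
  have sc: "s \<in> carrier G" using fwd.hyps(2) min_simples_sub simples_M M_car by blast
  have xc: "x \<in> carrier G" using CS_car assms fwd.hyps(1) by blast
  show ?case using fwd.IH sc xc by (simp add: m_assoc inv_mult_group)
next
  case (bwd y s x z g)
  have sc: "s \<in> carrier G" using bwd.hyps(2) min_simples_sub simples_M M_car by blast
  have yc: "y \<in> carrier G" using CS_car assms bwd.hyps(1) by blast
  show ?case using bwd.IH bwd.hyps(3) sc yc by (auto simp: m_assoc inv_mult_group)
qed

lemma path: assumes ac: "a \<in> carrier G"
  shows "B u = n \<Longrightarrow> u \<in> M \<Longrightarrow> x \<in> summit_class G M D a \<Longrightarrow> inv u \<otimes> x \<otimes> u \<in> summit_class G M D a \<Longrightarrow>
    (\<forall>z g. msg_walk G M D a (inv u \<otimes> x \<otimes> u) z g \<longrightarrow> msg_walk G M D a x z (u \<otimes> g)) \<and>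
    (\<forall>z g. msg_walk G M D a x z g \<longrightarrow> msg_walk G M D a (inv u \<otimes> x \<otimes> u) z (inv u \<otimes> g))"
proof (induction n arbitrary: u x rule: less_induct)
  case (less n)
  have uc: "u \<in> carrier G" using less.prems M_car by simp
  have xc: "x \<in> carrier G" using less.prems CS_car ac by blast
  show ?case
  proof (cases "u = \<one>")
    case True
    then show ?thesis using walk_prop[OF ac] xc by auto
  next
    case False
    have D1: "D \<noteq> \<one>" using D1_triv less.prems(2) False by blast
    have xD: "inv D \<otimes> x \<otimes> D \<in> summit_class G M D a"
      using CS_tau[OF ac less.prems(3), of "-1"] int_pow_neg[of D 1] by simp
    obtain w where w: "w \<in> M" "prefix_le G M w u" "prefix_le G M w D"
      "\<forall>k\<in>carrier G. prefix_le G M k u \<longrightarrow> prefix_le G M k D \<longrightarrow> prefix_le G M k w"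
      using gcdG[OF less.prems(2) D_M] by blast
    have wc: "w \<in> carrier G" using w M_car by simp
    have wS: "inv w \<otimes> x \<otimes> w \<in> summit_class G M D a"
      using convex[OF D1 ac less.prems(3) less.prems(2) D_M w(1) less.prems(4) xD w(2,3,4)] .
    obtain s1 where s1: "s1 \<in> simples G M D" "s1 \<noteq> \<one>" "prefix_le G M s1 u"
      using nontriv_prefix[OF less.prems(2) False] by blast
    have s1c: "s1 \<in> carrier G" using s1 simples_M M_car by auto
    have "prefix_le G M s1 D" using s1 by (simp add: simples_def)
    then have s1w: "prefix_le G M s1 w" using w(4) s1 s1c by blast
    have wne: "w \<noteq> \<one>"
    proof
      assume "w = \<one>"
      then have "inv s1 \<in> M" using s1w s1c by (simp add: pl_iff)
      then show False using unit_triv s1 simples_M by blast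
    qed
    have wsimp: "w \<in> simples G M D - {\<one>}" using w wne by (simp add: simples_def)
    obtain t where t: "t \<in> summit_min_simples G M D a x" "prefix_le G M t w"
      using min_exists[OF less.prems(3) wsimp wS] by blast
    have tprops: "t \<in> simples G M D" "t \<noteq> \<one>" "inv t \<otimes> x \<otimes> t \<in> summit_class G M D a"
      using min_simples_sub[OF t(1)] by auto
    have tc: "t \<in> carrier G" and tM: "t \<in> M" using tprops simples_M M_car by auto
    have tu: "prefix_le G M t u" using pl_trans[OF tc wc uc t(2) w(2)] .
    define u' where "u' = inv t \<otimes> u"
    have u'M: "u' \<in> M" using tu u'_def by (simp add: pl_iff)
    have u'c: "u' \<in> carrier G" using u'M M_car by simp
    have uu: "u = t \<otimes> u'" using u'_def tc uc by simp
    define x1 where "x1 = inv t \<otimes> x \<otimes> t"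
    have x1S: "x1 \<in> summit_class G M D a" using tprops x1_def by simp
    have eqy: "inv u' \<otimes> x1 \<otimes> u' = inv u \<otimes> x \<otimes> u" using uu x1_def tc u'c xc by (simp add: m_assoc inv_mult_group)
    have Bl: "B u' < n" using B_dec_left[OF tM tprops(2) u'M] uu less.prems(1) by simp
    have IH: "(\<forall>z g. msg_walk G M D a (inv u' \<otimes> x1 \<otimes> u') z g \<longrightarrow> msg_walk G M D a x1 z (u' \<otimes> g)) \<and>
      (\<forall>z g. msg_walk G M D a x1 z g \<longrightarrow> msg_walk G M D a (inv u' \<otimes> x1 \<otimes> u') z (inv u' \<otimes> g))"
      using less.IH[OF Bl refl u'M x1S] eqy less.prems(4) by simp
    have F: "msg_walk G M D a x z (u \<otimes> g)" if h: "msg_walk G M D a (inv u \<otimes> x \<otimes> u) z g" for z g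
    proof -
      have gc: "g \<in> carrier G" using walk_prop[OF ac h] by simp
      have "msg_walk G M D a x1 z (u' \<otimes> g)" using IH h eqy by simp
      then have "msg_walk G M D a x z (t \<otimes> (u' \<otimes> g))"
        using msg_walk.fwd[OF less.prems(3) t(1)] x1_def by simp
      then show ?thesis using uu tc u'c gc by (simp add: m_assoc)
    qed
    have Bw: "msg_walk G M D a (inv u \<otimes> x \<otimes> u) z (inv u \<otimes> g)" if h: "msg_walk G M D a x z g" for z g
    proof -
      have gc: "g \<in> carrier G" using walk_prop[OF ac h] by simp
      have "msg_walk G M D a x1 z (inv t \<otimes> g)"
        using msg_walk.bwd[OF less.prems(3) t(1) x1_def[symmetric] h] .
      then have "msg_walk G M D a (inv u' \<otimes> x1 \<otimes> u') z (inv u' \<otimes> (inv t \<otimes> g))" using IH by simp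
      then show ?thesis using eqy uu tc u'c gc by (simp add: m_assoc inv_mult_group)
    qed
    show ?thesis using F Bw by blast
  qed
qed

lemma main: assumes ac: "a \<in> carrier G" and a'S: "a' \<in> summit_class G M D a"
  shows "msg_loop_image G M D a a' = {c \<in> carrier G. c \<otimes> a' = a' \<otimes> c}"
proof
  have a'c: "a' \<in> carrier G" using CS_car ac a'S by blast
  show "msg_loop_image G M D a a' \<subseteq> {c \<in> carrier G. c \<otimes> a' = a' \<otimes> c}"
  proof
    fix g assume "g \<in> msg_loop_image G M D a a'"
    then have h: "msg_walk G M D a a' a' g" by (simp add: msg_loop_image_def)
    then have gc: "g \<in> carrier G" and e: "a' = inv g \<otimes> a' \<otimes> g" using walk_prop[OF ac h] by auto
    then have "g \<otimes> a' = g \<otimes> (inv g \<otimes> a' \<otimes> g)" by simp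
    also have "\<dots> = a' \<otimes> g" using gc a'c by (simp add: m_assoc)
    finally show "g \<in> {c \<in> carrier G. c \<otimes> a' = a' \<otimes> c}" using gc by simp
  qed
  show "{c \<in> carrier G. c \<otimes> a' = a' \<otimes> c} \<subseteq> msg_loop_image G M D a a'"
  proof
    fix c assume "c \<in> {c \<in> carrier G. c \<otimes> a' = a' \<otimes> c}"
    then have cc: "c \<in> carrier G" and cm: "c \<otimes> a' = a' \<otimes> c" by auto
    obtain n m where nm: "m \<in> M" "c = inv (D [^] (n::nat)) \<otimes> m" using decomp[OF cc] by blast
    define E where "E = D [^] n"
    have EM: "E \<in> M" using DnM E_def by simp
    have Ec: "E \<in> carrier G" using E_def by simp
    have mc: "m \<in> carrier G" using nm M_car by simp
    define y where "y = E \<otimes> a' \<otimes> inv E"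
    have Ei: "D [^] (int n) = E" unfolding E_def by (rule int_pow_int)
    have yS: "y \<in> summit_class G M D a"
      using CS_tau[OF ac a'S, of "int n"] unfolding Ei y_def .
    have "inv c \<otimes> a' \<otimes> c = inv c \<otimes> (c \<otimes> a')" using cm cc a'c by (simp add: m_assoc)
    then have ca: "inv c \<otimes> a' \<otimes> c = a'" using cc a'c by simp
    have mE: "m = E \<otimes> c" using nm E_def Ec mc by simp
    have e1: "inv m \<otimes> y \<otimes> m = a'" using ca mE y_def Ec cc a'c by (simp add: m_assoc inv_mult_group)
    have e2: "inv E \<otimes> y \<otimes> E = a'" using y_def Ec a'c by (simp add: m_assoc)
    have w0: "msg_walk G M D a a' a' \<one>" using a'S by (rule msg_walk.nil)
    have "msg_walk G M D a y a' (m \<otimes> \<one>)"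
      using path[OF ac refl nm(1) yS] e1 a'S w0 by simp
    then have w1: "msg_walk G M D a y a' m" using mc by simp
    have "msg_walk G M D a (inv E \<otimes> y \<otimes> E) a' (inv E \<otimes> m)"
      using path[OF ac refl EM yS] e2 a'S w1 by simp
    then have "msg_walk G M D a a' a' c" using e2 nm E_def by simp
    then show "c \<in> msg_loop_image G M D a a'" by (simp add: msg_loop_image_def)
  qed
qed

end

theorem theorem3p4:
  fixes G :: "('g, 'b) monoid_scheme" and M :: "'g set" and \<Delta> a a' :: 'g
  assumes "garside_group G M \<Delta>"
    and "a \<in> carrier G"
    and "a' \<in> summit_class G M \<Delta> a"
  shows "msg_loop_image G M \<Delta> a a' = {c \<in> carrier G. c \<otimes>\<^bsub>G\<^esub> a' = a' \<otimes>\<^bsub>G\<^esub> c}"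
  using GG.main[OF GG.intro[OF assms(1)] assms(2) assms(3)] .

end
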